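(* For any $k,\Delta \in \mathbb{N}$, there exists an $L\in\mathbb{N}$ such that the following holds. If $G$ is a finite graph with $f(G) < k$ and maximum degree at most $\Delta$, then $G$ contains at most $L$ vertices of degree at least $k-1$.
   Context: All graphs are finite and simple. For a graph $G$, $f(G)$ denotes the largest integer $k$ for which $G$ contains an induced subgraph in which exactly $k$ distinct values occur among the vertex degrees (i.e., an induced subgraph with $k$ distinct degrees). *)

theory Defs
  imports Main
begin

text \<open>A finite simple graph is given by a finite vertex set V and an edge relation E
  which is symmetric and irreflexive on V. Only edges with both ends in V matter.\<close>

definition simple_graph :: "'a set \<Rightarrow> ('a \<Rightarrow> 'a \<Rightarrow> bool) \<Rightarrow> bool" where
  "simple_graph V E \<longleftrightarrow> finite V \<and> (\<forall>u\<in>V. \<forall>v\<in>V. E u v \<longleftrightarrow> E v u) \<and> (\<forall>v\<in>V. \<not> E v v)"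

definition degree_in :: "'a set \<Rightarrow> ('a \<Rightarrow> 'a \<Rightarrow> bool) \<Rightarrow> 'a \<Rightarrow> nat" where
  "degree_in S E v = card {u \<in> S. E v u}"

definition num_distinct_degrees :: "'a set \<Rightarrow> ('a \<Rightarrow> 'a \<Rightarrow> bool) \<Rightarrow> nat" where
  "num_distinct_degrees S E = card (degree_in S E ` S)"

definition f_graph :: "'a set \<Rightarrow> ('a \<Rightarrow> 'a \<Rightarrow> bool) \<Rightarrow> nat" where
  "f_graph V E = Max {num_distinct_degrees S E | S. S \<subseteq> V}"

definition max_degree_le :: "'a set \<Rightarrow> ('a \<Rightarrow> 'a \<Rightarrow> bool) \<Rightarrow> nat \<Rightarrow> bool" where
  "max_degree_le V E D \<longleftrightarrow> (\<forall>v\<in>V. degree_in V E v \<le> D)"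

end

theory Submission
  imports Defs
begin

definition near :: "'a set \<Rightarrow> ('a\<Rightarrow>'a\<Rightarrow>bool) \<Rightarrow> 'a \<Rightarrow> 'a \<Rightarrow> bool" where
  "near V E v u \<longleftrightarrow> u = v \<or> E v u \<or> (\<exists>w\<in>V. E v w \<and> E w u)"

lemma near_sym:
  assumes "simple_graph V E" "u \<in> V" "v \<in> V" "near V E v u"
  shows "near V E u v"
  using assms unfolding near_def simple_graph_def by blast

lemma ball_card:
  assumes sg: "simple_graph V E" and md: "max_degree_le V E D" and v: "v \<in> V"
  shows "card {u\<in>V. near V E v u} \<le> 1 + D + D*D"
proof -
  define N where "N = (\<lambda>w. {u\<in>V. E w u})"
  have fin: "finite V" using sg simple_graph_def by auto
  have finN: "\<And>w. finite (N w)" using fin N_def by auto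
  have cN: "\<And>w. w \<in> V \<Longrightarrow> card (N w) \<le> D"
    using md unfolding max_degree_le_def degree_in_def N_def by auto
  have sub: "{u\<in>V. near V E v u} \<subseteq> {v} \<union> N v \<union> (\<Union>w\<in>N v. N w)"
    unfolding near_def N_def by auto
  have "card (\<Union>w\<in>N v. N w) \<le> (\<Sum>w\<in>N v. card (N w))"
    using finN card_UN_le by blast
  also have "\<dots> \<le> card (N v) * D"
    using cN sum_bounded_above[of "N v" "\<lambda>w. card (N w)" D] N_def by auto
  also have "\<dots> \<le> D * D" using cN[OF v] by simp
  finally have c2: "card (\<Union>w\<in>N v. N w) \<le> D * D" .
  have "card {u\<in>V. near V E v u} \<le> card ({v} \<union> N v \<union> (\<Union>w\<in>N v. N w))"
    by (rule card_mono) (use finN sub in auto)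
  also have "\<dots> \<le> card ({v} \<union> N v) + card (\<Union>w\<in>N v. N w)"
    by (rule card_Un_le)
  also have "\<dots> \<le> card {v} + card (N v) + card (\<Union>w\<in>N v. N w)"
    using card_Un_le[of "{v}" "N v"] by linarith
  finally show ?thesis using c2 cN[OF v] by simp
qed

lemma greedy:
  assumes sg: "simple_graph V E" and md: "max_degree_le V E D"
  shows "B \<subseteq> V \<Longrightarrow> n * (1 + D + D*D) < card B \<Longrightarrow>
     \<exists>T\<subseteq>B. card T = n \<and> (\<forall>u\<in>T. \<forall>v\<in>T. u \<noteq> v \<longrightarrow> \<not> near V E u v)"
proof (induction n arbitrary: B)
  case 0
  then show ?case by (intro exI[of _ "{}"]) auto
next
  case (Suc n)
  have fin: "finite V" using sg simple_graph_def by auto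
  hence finB: "finite B" using Suc.prems finite_subset by auto
  have "B \<noteq> {}" using Suc.prems by auto
  then obtain v where vB: "v \<in> B" by auto
  hence vV: "v \<in> V" using Suc.prems by auto
  define X where "X = {u\<in>V. near V E v u}"
  have cX: "card X \<le> 1 + D + D*D" using ball_card[OF sg md vV] X_def by simp
  have finX: "finite X" using fin X_def by auto
  have "card B - card X \<le> card (B - X)" using diff_card_le_card_Diff[OF finX] by simp
  hence "n * (1 + D + D*D) < card (B - X)" using Suc.prems(2) cX by simp
  then obtain T where T: "T \<subseteq> B - X" "card T = n"
     "\<forall>u\<in>T. \<forall>w\<in>T. u \<noteq> w \<longrightarrow> \<not> near V E u w"
    using Suc.IH[of "B - X"] Suc.prems by auto
  have vX: "v \<in> X" using vV X_def unfolding near_def by auto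
  have vT: "v \<notin> T" using T vX by auto
  have finT: "finite T" using T finB finite_subset by blast
  show ?case
  proof (intro exI[of _ "insert v T"] conjI ballI impI)
    show "insert v T \<subseteq> B" using T vB by auto
    show "card (insert v T) = Suc n" using vT finT T by simp
  next
    fix a b assume ab: "a \<in> insert v T" "b \<in> insert v T" "a \<noteq> b"
    show "\<not> near V E a b"
    proof (cases "a = v")
      case True
      then have "b \<in> T" using ab by auto
      then show ?thesis using T True X_def Suc.prems by auto
    next
      case False
      then have aT: "a \<in> T" using ab by auto
      show ?thesis
      proof (cases "b = v")
        case True
        have aV: "a \<in> V" using aT T Suc.prems by auto
        have "\<not> near V E v a" using aT T X_def aV by auto
        then show ?thesis using True near_sym[OF sg vV aV] by blast
      next
        case False
        then show ?thesis using aT ab T by auto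
      qed
    qed
  qed
qed

lemma far_gives_f:
  assumes sg: "simple_graph V E" and TV: "T \<subseteq> V" and cT: "card T = k"
    and far: "\<forall>u\<in>T. \<forall>v\<in>T. u \<noteq> v \<longrightarrow> \<not> near V E u v"
    and deg: "\<forall>v\<in>T. k - 1 \<le> degree_in V E v"
  shows "k \<le> f_graph V E"
proof -
  have fin: "finite V" using sg simple_graph_def by auto
  have finT: "finite T" using fin TV finite_subset by auto
  obtain g where g: "bij_betw g T {0..<k}"
    using finT cT by (metis atLeast0LessThan card_lessThan ex_bij_betw_finite_nat)
  have "\<forall>v\<in>T. \<exists>A. A \<subseteq> {u\<in>V. E v u} \<and> card A = g v"
  proof
    fix v assume vT: "v \<in> T"
    have "g v < k" using g vT bij_betw_apply by fastforce
    hence "g v \<le> card {u\<in>V. E v u}" using deg vT unfolding degree_in_def by auto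
    then show "\<exists>A. A \<subseteq> {u\<in>V. E v u} \<and> card A = g v"
      using obtain_subset_with_card_n by metis
  qed
  then obtain A where A: "\<And>v. v \<in> T \<Longrightarrow> A v \<subseteq> {u\<in>V. E v u} \<and> card (A v) = g v"
    by metis
  define H where "H = (\<Union>v\<in>T. insert v (A v))"
  have HV: "H \<subseteq> V" using A TV H_def by auto
  have nb: "{u\<in>H. E v u} = A v" if vT: "v \<in> T" for v
  proof
    show "A v \<subseteq> {u\<in>H. E v u}" using A[OF vT] H_def vT by auto
  next
    show "{u\<in>H. E v u} \<subseteq> A v"
    proof
      fix u assume u: "u \<in> {u\<in>H. E v u}"
      then obtain w where wT: "w \<in> T" and uw: "u \<in> insert w (A w)" using H_def by auto
      have vV: "v \<in> V" using vT TV by auto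
      have uV: "u \<in> V" using u HV by auto
      have Evu: "E v u" using u by auto
      show "u \<in> A v"
      proof (cases "w = v")
        case True
        then show ?thesis using uw Evu sg vV unfolding simple_graph_def by auto
      next
        case False
        have nn: "\<not> near V E v w" using far vT wT False by auto
        show ?thesis
        proof (cases "u = w")
          case True
          then show ?thesis using nn Evu unfolding near_def by auto
        next
          case False
          then have "E w u" using uw A[OF wT] by auto
          hence "E u w" using sg uV wT TV unfolding simple_graph_def by auto
          then show ?thesis using nn Evu uV unfolding near_def by auto
        qed
      qed
    qed
  qed
  have dv: "degree_in H E v = g v" if "v \<in> T" for v
    using nb[OF that] A[OF that] unfolding degree_in_def by auto
  have "{0..<k} = g ` T" using g unfolding bij_betw_def by auto
  also have "\<dots> = degree_in H E ` T" using dv by auto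
  also have "\<dots> \<subseteq> degree_in H E ` H" using H_def by auto
  finally have sub: "{0..<k} \<subseteq> degree_in H E ` H" .
  have finH: "finite H" using HV fin finite_subset by auto
  have "k \<le> num_distinct_degrees H E"
    unfolding num_distinct_degrees_def
    using card_mono[OF finite_imageI[OF finH] sub] by simp
  moreover have "num_distinct_degrees H E \<le> f_graph V E"
  proof -
    have "{num_distinct_degrees S E | S. S \<subseteq> V} = (\<lambda>S. num_distinct_degrees S E) ` Pow V"
      by auto
    hence "finite {num_distinct_degrees S E | S. S \<subseteq> V}" using fin by simp
    then show ?thesis unfolding f_graph_def using HV by (intro Max_ge) auto
  qed
  ultimately show ?thesis by simp
qed

theorem proposition2p2:
  fixes k \<Delta> :: nat
  shows "\<exists>L::nat. \<forall>(V::nat set) E.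
           simple_graph V E \<longrightarrow> f_graph V E < k \<longrightarrow> max_degree_le V E \<Delta> \<longrightarrow>
           card {v \<in> V. k - 1 \<le> degree_in V E v} \<le> L"
proof (intro exI[of _ "k * (1 + \<Delta> + \<Delta>*\<Delta>)"] allI impI)
  fix V :: "nat set" and E
  assume sg: "simple_graph V E" and f: "f_graph V E < k" and md: "max_degree_le V E \<Delta>"
  show "card {v \<in> V. k - 1 \<le> degree_in V E v} \<le> k * (1 + \<Delta> + \<Delta>*\<Delta>)"
  proof (rule ccontr)
    assume "\<not> ?thesis"
    then obtain T where T: "T \<subseteq> {v \<in> V. k - 1 \<le> degree_in V E v}" "card T = k"
      "\<forall>u\<in>T. \<forall>v\<in>T. u \<noteq> v \<longrightarrow> \<not> near V E u v"
      using greedy[OF sg md, of "{v \<in> V. k - 1 \<le> degree_in V E v}" k] by auto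
    have "k \<le> f_graph V E"
      by (rule far_gives_f[OF sg _ T(2) T(3)]) (use T(1) in auto)
    then show False using f by simp
  qed
qed

end
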